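(* Let $A$ be a finite weighted Büchi automaton (WBA) and $c\in\mathbb{N}$. Then $A$ admits a Büchi accepted $c$-feasible infinite run if and only if $A$ admits a Büchi accepted $c$-feasible lasso, i.e. an infinite run of the form $\gamma_1\gamma_2^\omega$ where $\gamma_1,\gamma_2$ are finite runs, $\gamma_2$ is nonempty and starts and ends in the same state (the last state of $\gamma_1$), and $\gamma_2^\omega$ denotes the infinite repetition of $\gamma_2$.
   Context: A weighted (transition-based, generalized) Büchi automaton (WBA) is a structure $A=(\Sigma,\mathcal{M},S,s_0,T)$ where $\Sigma$ is a finite alphabet, $\mathcal{M}$ is a finite set of colors, $S$ is a set of states with initial state $s_0\in S$, and $T\subseteq S\times\Sigma\times 2^{\mathcal{M}}\times\mathbb{R}\times S$ is a set of transitions; a transition $(s,\ell,M,w,s')$ has letter $\ell$, color set $M$ and weight $w$. $A$ is finite if $S$ and $T$ are finite and $T\subseteq S\times\Sigma\times 2^{\mathcal{M}}\times\mathbb{Z}\times S$ (integer weights). A run is a finite or infinite sequence of transitions $s_1\to s_2\to\cdots$ in which each transition starts in the state where the previous one ends. A weak upper bound $b\in\mathbb{N}$ is fixed throughout. For an initial credit $c$ and a run $s_1\xrightarrow{w_1}s_2\xrightarrow{w_2}\cdots$, the accumulated weights are $e_1=\min(b,c)$ and $e_{i+1}=\min(b,e_i+w_i)$; the run is $c$-feasible (i.e. $(c,b)$-feasible) if $e_i\ge 0$ for all $i$. An infinite run $s_1\to_{M_1}s_2\to_{M_2}\cdots$ is Büchi accepted if every color $m\in\mathcal{M}$ lies in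 $M_j$ for infinitely many $j$. *)

theory Defs
  imports Main
begin

type_synonym ('s,'l,'m) trans = "'s \<times> 'l \<times> 'm set \<times> int \<times> 's"

record ('s,'l,'m) wba =
  alph   :: "'l set"
  colors :: "'m set"
  states :: "'s set"
  init   :: "'s"
  trans  :: "('s,'l,'m) trans set"

definition src :: "('s,'l,'m) trans \<Rightarrow> 's" where
  "src t = fst t"
definition lbl :: "('s,'l,'m) trans \<Rightarrow> 'l" where
  "lbl t = fst (snd t)"
definition col :: "('s,'l,'m) trans \<Rightarrow> 'm set" where
  "col t = fst (snd (snd t))"
definition wt :: "('s,'l,'m) trans \<Rightarrow> int" where
  "wt t = fst (snd (snd (snd t)))"
definition tgt :: "('s,'l,'m) trans \<Rightarrow> 's" where
  "tgt t = snd (snd (snd (snd t)))"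

definition finite_wba :: "('s,'l,'m) wba \<Rightarrow> bool" where
  "finite_wba A \<longleftrightarrow> finite (alph A) \<and> finite (colors A) \<and> finite (states A) \<and>
     init A \<in> states A \<and> finite (trans A) \<and>
     trans A \<subseteq> states A \<times> alph A \<times> Pow (colors A) \<times> (UNIV::int set) \<times> states A"

definition inf_run :: "('s,'l,'m) wba \<Rightarrow> (nat \<Rightarrow> ('s,'l,'m) trans) \<Rightarrow> bool" where
  "inf_run A r \<longleftrightarrow> (\<forall>i. r i \<in> trans A) \<and> (\<forall>i. tgt (r i) = src (r (Suc i)))"

definition fin_run :: "('s,'l,'m) wba \<Rightarrow> ('s,'l,'m) trans list \<Rightarrow> bool" where
  "fin_run A g \<longleftrightarrow> set g \<subseteq> trans A \<and> (\<forall>i. Suc i < length g \<longrightarrow> tgt (g!i) = src (g!Suc i))"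

text \<open>Accumulated weights with weak upper bound b and initial credit c:
  e_1 = min b c, e_{i+1} = min b (e_i + w_i) (indices shifted to start at 0).\<close>
fun acc :: "nat \<Rightarrow> nat \<Rightarrow> (nat \<Rightarrow> ('s,'l,'m) trans) \<Rightarrow> nat \<Rightarrow> int" where
  "acc b c r 0 = min (int b) (int c)"
| "acc b c r (Suc i) = min (int b) (acc b c r i + wt (r i))"

definition feasible :: "nat \<Rightarrow> nat \<Rightarrow> (nat \<Rightarrow> ('s,'l,'m) trans) \<Rightarrow> bool" where
  "feasible b c r \<longleftrightarrow> (\<forall>i. acc b c r i \<ge> 0)"

definition buchi_acc :: "('s,'l,'m) wba \<Rightarrow> (nat \<Rightarrow> ('s,'l,'m) trans) \<Rightarrow> bool" where
  "buchi_acc A r \<longleftrightarrow> (\<forall>m \<in> colors A. \<exists>\<^sub>\<infinity> j. m \<in> col (r j))"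

definition lasso :: "('s,'l,'m) trans list \<Rightarrow> ('s,'l,'m) trans list \<Rightarrow> nat \<Rightarrow> ('s,'l,'m) trans" where
  "lasso g1 g2 i = (if i < length g1 then g1 ! i else g2 ! ((i - length g1) mod length g2))"

definition is_lasso :: "('s,'l,'m) wba \<Rightarrow> ('s,'l,'m) trans list \<Rightarrow> ('s,'l,'m) trans list \<Rightarrow> bool" where
  "is_lasso A g1 g2 \<longleftrightarrow> fin_run A g1 \<and> fin_run A g2 \<and> g2 \<noteq> [] \<and>
     src (hd g2) = tgt (last g2) \<and> (g1 \<noteq> [] \<longrightarrow> tgt (last g1) = src (hd g2))"

end

theory Submission
  imports Defs "HOL-Library.Infinite_Set"
begin

lemma acc_le_b: "acc b c r n \<le> int b"
  by (cases n) auto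

lemma acc_transfer:
  assumes r': "\<And>n. r' n = r (p n)" and p0: "p 0 = 0"
    and ps: "\<And>n. p (Suc n) = Suc (p n) \<or> (p (Suc n) = i \<and> Suc (p n) = j)"
    and eq: "acc b c r i = acc b c r j"
  shows "acc b c r' n = acc b c r (p n)"
proof (induction n)
  case 0
  then show ?case using p0 by simp
next
  case (Suc n)
  have rr: "r' = (\<lambda>n. r (p n))" using r' by auto
  have "acc b c r' (Suc n) = acc b c r (Suc (p n))" using Suc unfolding rr by simp
  also have "\<dots> = acc b c r (p (Suc n))" using ps[of n] eq by auto
  finally show ?case .
qed

lemma lasso_inf_run:
  assumes "is_lasso A g1 g2"
  shows "inf_run A (lasso g1 g2)"
proof -
  have f1: "fin_run A g1" and f2: "fin_run A g2" and ne: "g2 \<noteq> []"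
    and c2: "src (hd g2) = tgt (last g2)" and c1: "g1 \<noteq> [] \<longrightarrow> tgt (last g1) = src (hd g2)"
    using assms unfolding is_lasso_def by auto
  define L where "L = length g2"
  have L: "L > 0" using ne L_def by auto
  have mem: "lasso g1 g2 n \<in> trans A" for n
  proof (cases "n < length g1")
    case True then show ?thesis using f1 unfolding lasso_def fin_run_def by auto
  next
    case False
    have "(n - length g1) mod L < L" using L by auto
    then show ?thesis using False f2 unfolding lasso_def fin_run_def L_def by auto
  qed
  have ch: "tgt (lasso g1 g2 n) = src (lasso g1 g2 (Suc n))" for n
  proof -
    consider "Suc n < length g1" | "Suc n = length g1" | "n \<ge> length g1" by linarith
    then show ?thesis
    proof cases
      case 1 then show ?thesis using f1 unfolding lasso_def fin_run_def by auto
    next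
      case 2
      then have "g1 \<noteq> []" by auto
      moreover have "g1 ! n = last g1" using 2 by (metis diff_Suc_1 last_conv_nth list.size(3) nat.distinct(1))
      moreover have "g2 ! 0 = hd g2" using ne by (simp add: hd_conv_nth)
      ultimately show ?thesis using 2 c1 unfolding lasso_def by auto
    next
      case 3
      define x where "x = (n - length g1) mod L"
      have x: "x < L" using L x_def by auto
      have sx: "Suc n - length g1 = Suc (n - length g1)" using 3 by auto
      show ?thesis
      proof (cases "Suc x = L")
        case True
        then have "(Suc n - length g1) mod L = 0" using sx x_def by (simp add: mod_Suc)
        moreover have "g2 ! x = last g2" proof -
          have "x = length g2 - 1" using True L_def by simp
          then show ?thesis using ne by (simp add: last_conv_nth)
        qed
        moreover have "g2 ! 0 = hd g2" using ne by (simp add: hd_conv_nth)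
        ultimately show ?thesis using 3 c2 x_def unfolding lasso_def by (auto simp: L_def)
      next
        case False
        then have "(Suc n - length g1) mod L = Suc x" using sx x_def by (simp add: mod_Suc)
        moreover have "Suc x < length g2" using False x L_def by auto
        ultimately show ?thesis using 3 f2 x_def unfolding lasso_def fin_run_def by (auto simp: L_def)
      qed
    qed
  qed
  show ?thesis unfolding inf_run_def using mem ch by auto
qed

theorem lemma2:
  fixes A :: "('s,'l,'m) wba" and b c :: nat
  assumes "finite_wba A"
  shows "(\<exists>r. inf_run A r \<and> buchi_acc A r \<and> feasible b c r) \<longleftrightarrow>
         (\<exists>g1 g2. is_lasso A g1 g2 \<and> buchi_acc A (lasso g1 g2) \<and> feasible b c (lasso g1 g2))"
proof
  assume "\<exists>g1 g2. is_lasso A g1 g2 \<and> buchi_acc A (lasso g1 g2) \<and> feasible b c (lasso g1 g2)"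
  then show "\<exists>r. inf_run A r \<and> buchi_acc A r \<and> feasible b c r" using lasso_inf_run by blast
next
  assume "\<exists>r. inf_run A r \<and> buchi_acc A r \<and> feasible b c r"
  then obtain r where run: "inf_run A r" and ba: "buchi_acc A r" and fe: "feasible b c r" by blast
  have finC: "finite (colors A)" and finT: "finite (trans A)" using assms unfolding finite_wba_def by auto
  define allc where "allc n M \<longleftrightarrow> (\<forall>m\<in>colors A. \<exists>k. n \<le> k \<and> k < M \<and> m \<in> col (r k))" for n M
  have ex: "\<exists>M>n. allc n M" for n
  proof -
    have "\<forall>m\<in>colors A. \<exists>k\<ge>n. m \<in> col (r k)"
      using ba unfolding buchi_acc_def INFM_nat_le by auto
    then obtain g where g: "\<forall>m\<in>colors A. g m \<ge> n \<and> m \<in> col (r (g m))" by metis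
    define M where "M = Suc (Max (insert n (g ` colors A)))"
    have "\<forall>m\<in>colors A. g m < M" unfolding M_def using finC
      by (simp add: le_imp_less_Suc)
    moreover have "n < M" unfolding M_def using finC by (simp add: le_imp_less_Suc)
    ultimately show ?thesis using g unfolding allc_def by blast
  qed
  then obtain nxt where nxt: "\<And>n. nxt n > n \<and> allc n (nxt n)" by metis
  define t where "t k = (nxt ^^ k) 0" for k
  have tS: "t (Suc k) = nxt (t k)" for k unfolding t_def by simp
  have smt: "strict_mono t" unfolding strict_mono_Suc_iff using tS nxt by auto
  define key where "key i = (r i, acc b c r i)" for i
  have rng: "range (key \<circ> t) \<subseteq> trans A \<times> {0..int b}"
    using run fe acc_le_b unfolding key_def inf_run_def feasible_def by auto
  have "finite (range (key \<circ> t))" by (rule finite_subset[OF rng]) (use finT in simp)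
  then have "\<not> inj (key \<circ> t)" using finite_imageD infinite_UNIV_nat by blast
  then obtain k l where kl0: "k \<noteq> l" "key (t k) = key (t l)" unfolding inj_def by auto
  then obtain k l where kl: "k < l" "key (t k) = key (t l)"
    by (metis linorder_neqE_nat)
  define i where "i = t k"
  define j where "j = t l"
  have ij: "i < j" using smt kl unfolding i_def j_def strict_mono_def by auto
  have rij: "r i = r j" and aij: "acc b c r i = acc b c r j" using kl unfolding i_def j_def key_def by auto
  have tSl: "t (Suc k) \<le> t l" using smt kl by (simp add: Suc_leI strict_mono_less_eq)
  have nl: "nxt (t k) \<le> t l" using tSl tS by metis
  have allij: "allc i j" unfolding allc_def
  proof
    fix m assume "m \<in> colors A"
    then obtain q where "i \<le> q" "q < nxt i" "m \<in> col (r q)" using nxt[of i] unfolding allc_def by blast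
    then show "\<exists>q. i \<le> q \<and> q < j \<and> m \<in> col (r q)" using nl unfolding i_def j_def by fastforce
  qed
  define d where "d = j - i"
  have d: "d > 0" using ij d_def by auto
  define g1 where "g1 = map r [0..<i]"
  define g2 where "g2 = map r [i..<j]"
  define p where "p n = (if n < i then n else i + (n - i) mod d)" for n
  have lp: "lasso g1 g2 n = r (p n)" for n
  proof (cases "n < i")
    case True then show ?thesis unfolding lasso_def g1_def p_def by auto
  next
    case False
    have "(n - i) mod d < d" using d by auto
    then show ?thesis using False unfolding lasso_def g1_def g2_def p_def d_def by auto
  qed
  have p0: "p 0 = 0" unfolding p_def by auto
  have ps: "p (Suc n) = Suc (p n) \<or> (p (Suc n) = i \<and> Suc (p n) = j)" for n
  proof (cases "Suc n \<le> i")
    case True then show ?thesis unfolding p_def by auto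
  next
    case False
    then have sx: "Suc n - i = Suc (n - i)" by auto
    have "(n - i) mod d < d" using d by auto
    then show ?thesis using False sx unfolding p_def by (auto simp: mod_Suc d_def)
  qed
  have accl: "acc b c (lasso g1 g2) n = acc b c r (p n)" for n
    by (rule acc_transfer[OF lp p0 ps aij])
  have feas: "feasible b c (lasso g1 g2)" using fe accl unfolding feasible_def by auto
  have buchi: "buchi_acc A (lasso g1 g2)"
    unfolding buchi_acc_def INFM_nat_le
  proof (intro ballI allI)
    fix m m0 assume m: "m \<in> colors A"
    then obtain q where q: "i \<le> q" "q < j" "m \<in> col (r q)" using allij unfolding allc_def by auto
    define n where "n = q + m0 * d"
    have "m0 \<le> m0 * d" using d by simp
    then have "n \<ge> m0" unfolding n_def by linarith
    moreover have "p n = q"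
    proof -
      have "n - i = (q - i) + m0 * d" using q unfolding n_def by auto
      moreover have "q - i < d" using q d_def by linarith
      ultimately have "(n - i) mod d = q - i" by (metis mod_mult_self1 mod_less)
      then show ?thesis using q unfolding p_def n_def by auto
    qed
    ultimately show "\<exists>n\<ge>m0. m \<in> col (lasso g1 g2 n)" using lp q by metis
  qed
  have fr1: "fin_run A g1" using run unfolding fin_run_def inf_run_def g1_def by auto
  have fr2: "fin_run A g2" using run unfolding fin_run_def inf_run_def g2_def by auto
  have ne: "g2 \<noteq> []" using ij g2_def by auto
  have hd2: "hd g2 = r i" using ij unfolding g2_def by (simp add: upt_conv_Cons)
  have last2: "last g2 = r (j - 1)" using ij unfolding g2_def by (simp add: last_map)
  have "tgt (r (j - 1)) = src (r j)" using run ij unfolding inf_run_def by (metis Suc_pred' gr0I less_nat_zero_code)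
  then have c2: "src (hd g2) = tgt (last g2)" using hd2 last2 rij by simp
  have c1: "g1 \<noteq> [] \<longrightarrow> tgt (last g1) = src (hd g2)"
  proof
    assume "g1 \<noteq> []"
    then have "i > 0" unfolding g1_def by auto
    then have "last g1 = r (i - 1)" unfolding g1_def by (simp add: last_map)
    moreover have "tgt (r (i - 1)) = src (r i)" using run \<open>i > 0\<close> unfolding inf_run_def by (metis Suc_pred')
    ultimately show "tgt (last g1) = src (hd g2)" using hd2 by simp
  qed
  have "is_lasso A g1 g2" unfolding is_lasso_def using fr1 fr2 ne c1 c2 by auto
  then show "\<exists>g1 g2. is_lasso A g1 g2 \<and> buchi_acc A (lasso g1 g2) \<and> feasible b c (lasso g1 g2)"
    using buchi feas by blast
qed

end
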